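(* Fix an instance of MCND and a partial aggregation $\mathcal{B}$ (see context). (i) If $(\bar x,\bar y)$ is a feasible solution of the LP relaxation of the DA formulation, then there exist values $z$ of the artificial variables such that $(x,y,z)$, with $x_{ij}^D=\sum_{k\in D}\bar x_{ij}^k$ for all $(i,j)\in\mathcal{A}$, $b\in\mathcal{B}$, $D\in\mathcal{G}_b^{ij}$, and $y_{ij}=\bar y_{ij}$ for all $(i,j)\in\mathcal{A}$, is a feasible solution of the LP relaxation of the PAe formulation built on $\mathcal{B}$; this solution has the same objective value as $(\bar x,\bar y)$. (ii) The converse fails in general: there exist an instance and a partial aggregation $\mathcal{B}$ for which the LP relaxation of PAe has a feasible solution $(x,y,z)$ such that there is no feasible solution $(\bar x,\bar y)$ of the LP relaxation of DA with $\bar y=y$ and $x_{ij}^D=\sum_{k\in D}\bar x_{ij}^k$ for all $(i,j),b,D$. (That is, DA is stronger than PAe.)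
   Context: An instance of MCND consists of a directed graph $G=(\mathcal{N},\mathcal{A})$, a finite set $\mathcal{K}$ of commodities, each $k\in\mathcal{K}$ having an origin $o^k\in\mathcal{N}$, a destination $s^k\in\mathcal{N}$ and a demand $d^k\ge 0$, and for each arc $(i,j)\in\mathcal{A}$ a capacity $u_{ij}$, a per-unit flow cost $c_{ij}$ and a fixed cost $f_{ij}$, all nonnegative. Let $o_i^k=1$ if $i=o^k$ and $0$ otherwise, $s_i^k=1$ if $i=s^k$ and $0$ otherwise, $\mathcal{N}_i^+=\{j:(i,j)\in\mathcal{A}\}$, $\mathcal{N}_i^-=\{j:(j,i)\in\mathcal{A}\}$. LP relaxation of DA: variables $x_{ij}^k\ge 0$ ($k\in\mathcal{K},(i,j)\in\mathcal{A}$) and $0\le y_{ij}\le 1$; minimize $\sum_{k}\sum_{(i,j)}c_{ij}x_{ij}^k+\sum_{(i,j)}f_{ij}y_{ij}$ subject to $\sum_{j\in\mathcal{N}_i^+}x_{ij}^k-\sum_{j\in\mathcal{N}_i^-}x_{ji}^k=(o_i^k-s_i^k)d^k$ for all $k,i$; $\sum_k x_{ij}^k\le u_{ij}y_{ij}$ for all $(i,j)$; $x_{ij}^k\le d^k y_{ij}$ for all $k,(i,j)$. Dispersion: a nonempty set $\mathcal{K}_b\subseteq\mathcal{K}$ of commodities sharing a common origin, together with, for every arc $(i,j)\in\mathcal{A}$, a partition of $\mathcal{K}_b$ into $\mathcal{K}_b^{ij}$ (commodities aggregated on $(i,j)$) and $\mathcal{D}_b^{ij}$ (commodities disaggregated on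 $(i,j)$); either part may be empty. Let $\mathcal{G}_b^{ij}$ be the family consisting of the set $\mathcal{K}_b^{ij}$ (if nonempty) together with the singletons $\{k\}$, $k\in\mathcal{D}_b^{ij}$. A partial aggregation is a set $\mathcal{B}$ of dispersions such that every $k\in\mathcal{K}$ lies in $\mathcal{K}_b$ for exactly one $b\in\mathcal{B}$. LP relaxation of PA (for $\mathcal{B}$): variables $x_{ij}^D\ge0$ for $(i,j)\in\mathcal{A}$, $b\in\mathcal{B}$, $D\in\mathcal{G}_b^{ij}$ (since the $\mathcal{K}_b$ are disjoint, $D$ determines $b$), and $0\le y_{ij}\le1$; minimize $\sum_{(i,j)}c_{ij}\sum_{b}\sum_{D\in\mathcal{G}_b^{ij}}x_{ij}^D+\sum_{(i,j)}f_{ij}y_{ij}$ subject to: for all $b\in\mathcal{B}$, $i\in\mathcal{N}$: $\sum_{j\in\mathcal{N}_i^+}\sum_{D\in\mathcal{G}_b^{ij}}x_{ij}^D-\sum_{j\in\mathcal{N}_i^-}\sum_{D\in\mathcal{G}_b^{ji}}x_{ji}^D=\sum_{k\in\mathcal{K}_b}(o_i^k-s_i^k)d^k$; for all $(i,j)$: $\sum_b\sum_{D\in\mathcal{G}_b^{ij}}x_{ij}^D\le u_{ij}y_{ij}$; for all $(i,j),b,D\in\mathcal{G}_b^{ij}$: $x_{ij}^D\le(\sum_{k\in D}d^k)y_{ij}$. LP relaxation of PAe: the PA LP plus the following. For $b\in\mathcal{B}$, $i\in\mathcal{N}$ let $\mathcal{L}_b^i=\{k\in\mathcal{K}_b:k\in\mathcal{D}_b^{ji}\text{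 for some }j\in\mathcal{N}_i^-\text{ or }k\in\mathcal{D}_b^{ij}\text{ for some }j\in\mathcal{N}_i^+\}$; $\mathcal{M}_b^i=\{\{k\}:k\in\mathcal{L}_b^i\}\cup\{\mathcal{K}_b\setminus\mathcal{L}_b^i\}$ (the last set only if nonempty); $\check{\mathcal{T}}_b^i$ = the set of distinct nonempty sets among $\{\mathcal{K}_b^{ji}:j\in\mathcal{N}_i^-\}$; $\hat{\mathcal{T}}_b^i$ = the set of distinct nonempty sets among $\{\mathcal{K}_b^{ij}:j\in\mathcal{N}_i^+\}$. For every $(b,i)$ with $\mathcal{L}_b^i\neq\emptyset$ add variables $z_{CD}^{ib}\ge0$ for $C\in\check{\mathcal{T}}_b^i$, $D\in\mathcal{M}_b^i$ with $C\cap D\ne\emptyset$, and $z_{DC}^{ib}\ge0$ for $D\in\mathcal{M}_b^i$, $C\in\hat{\mathcal{T}}_b^i$ with $C\cap D\neq\emptyset$ (these have zero cost), and constraints: for each $D\in\mathcal{M}_b^i$: $\sum_{j\in\mathcal{N}_i^+:\,D=\{k\},k\in\mathcal{D}_b^{ij}}x_{ij}^{D}-\sum_{j\in\mathcal{N}_i^-:\,D=\{k\},k\in\mathcal{D}_b^{ji}}x_{ji}^{D}+\sum_{C\in\hat{\mathcal{T}}_b^i:C\cap D\neq\emptyset}z_{DC}^{ib}-\sum_{C\in\check{\mathcal{T}}_b^i:C\cap D\ne\emptyset}z_{CD}^{ib}=\sum_{k\in D}(o_i^k-s_i^k)d^k$; for each $C\in\check{\mathcal{T}}_b^i$: $\sum_{D\in\mathcal{M}_b^i:C\cap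 D\ne\emptyset}z_{CD}^{ib}-\sum_{j\in\mathcal{N}_i^-:\mathcal{K}_b^{ji}=C}x_{ji}^C=0$; for each $C\in\hat{\mathcal{T}}_b^i$: $\sum_{j\in\mathcal{N}_i^+:\mathcal{K}_b^{ij}=C}x_{ij}^C-\sum_{D\in\mathcal{M}_b^i:C\cap D\neq\emptyset}z_{DC}^{ib}=0$. The objective is that of PA. *)

theory Defs
  imports Complex_Main
begin

record ('n, 'k) mcnd =
  nodes :: "'n set"
  arcs  :: "('n \<times> 'n) set"
  comms :: "'k set"
  orig  :: "'k \<Rightarrow> 'n"
  dst   :: "'k \<Rightarrow> 'n"
  dem   :: "'k \<Rightarrow> real"
  cap   :: "'n \<times> 'n \<Rightarrow> real"
  ucost :: "'n \<times> 'n \<Rightarrow> real"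
  fcost :: "'n \<times> 'n \<Rightarrow> real"

definition mcnd_instance :: "('n, 'k) mcnd \<Rightarrow> bool" where
  "mcnd_instance I \<longleftrightarrow>
     finite (nodes I) \<and> arcs I \<subseteq> nodes I \<times> nodes I \<and> finite (comms I) \<and>
     (\<forall>k\<in>comms I. orig I k \<in> nodes I \<and> dst I k \<in> nodes I \<and> dem I k \<ge> 0) \<and>
     (\<forall>a\<in>arcs I. cap I a \<ge> 0 \<and> ucost I a \<ge> 0 \<and> fcost I a \<ge> 0)"

definition outN :: "('n, 'k) mcnd \<Rightarrow> 'n \<Rightarrow> 'n set" where
  "outN I i = {j. (i, j) \<in> arcs I}"

definition inN :: "('n, 'k) mcnd \<Rightarrow> 'n \<Rightarrow> 'n set" where
  "inN I i = {j. (j, i) \<in> arcs I}"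

definition netsupply :: "('n, 'k) mcnd \<Rightarrow> 'k \<Rightarrow> 'n \<Rightarrow> real" where
  "netsupply I k i = ((if i = orig I k then 1 else 0) - (if i = dst I k then 1 else 0)) * dem I k"

definition DA_feasible :: "('n, 'k) mcnd \<Rightarrow> ('k \<Rightarrow> 'n \<times> 'n \<Rightarrow> real) \<Rightarrow> ('n \<times> 'n \<Rightarrow> real) \<Rightarrow> bool" where
  "DA_feasible I x y \<longleftrightarrow>
     (\<forall>k\<in>comms I. \<forall>a\<in>arcs I. x k a \<ge> 0) \<and>
     (\<forall>a\<in>arcs I. 0 \<le> y a \<and> y a \<le> 1) \<and>
     (\<forall>k\<in>comms I. \<forall>i\<in>nodes I.
        (\<Sum>j\<in>outN I i. x k (i, j)) - (\<Sum>j\<in>inN I i. x k (j, i)) = netsupply I k i) \<and>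
     (\<forall>a\<in>arcs I. (\<Sum>k\<in>comms I. x k a) \<le> cap I a * y a) \<and>
     (\<forall>k\<in>comms I. \<forall>a\<in>arcs I. x k a \<le> dem I k * y a)"

definition DA_obj :: "('n, 'k) mcnd \<Rightarrow> ('k \<Rightarrow> 'n \<times> 'n \<Rightarrow> real) \<Rightarrow> ('n \<times> 'n \<Rightarrow> real) \<Rightarrow> real" where
  "DA_obj I x y = (\<Sum>a\<in>arcs I. ucost I a * (\<Sum>k\<in>comms I. x k a)) + (\<Sum>a\<in>arcs I. fcost I a * y a)"

text \<open>A dispersion $b$ is a pair: its commodity set $\mathcal{K}_b$ (first component) and,
  for each arc $(i,j)$, the set $\mathcal{K}_b^{ij}$ of commodities aggregated on it (second
  component).\<close>

type_synonym ('n, 'k) dispersion = "'k set \<times> ('n \<times> 'n \<Rightarrow> 'k set)"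

definition Kset :: "('n, 'k) dispersion \<Rightarrow> 'k set" where
  "Kset b = fst b"

definition Agg :: "('n, 'k) dispersion \<Rightarrow> 'n \<times> 'n \<Rightarrow> 'k set" where
  "Agg b a = snd b a"

definition Dis :: "('n, 'k) dispersion \<Rightarrow> 'n \<times> 'n \<Rightarrow> 'k set" where
  "Dis b a = Kset b - Agg b a"

definition is_dispersion :: "('n, 'k) mcnd \<Rightarrow> ('n, 'k) dispersion \<Rightarrow> bool" where
  "is_dispersion I b \<longleftrightarrow>
     Kset b \<noteq> {} \<and> Kset b \<subseteq> comms I \<and>
     (\<exists>r. \<forall>k\<in>Kset b. orig I k = r) \<and>
     (\<forall>a\<in>arcs I. Agg b a \<subseteq> Kset b)"

definition partial_aggregation :: "('n, 'k) mcnd \<Rightarrow> ('n, 'k) dispersion set \<Rightarrow> bool" where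
  "partial_aggregation I B \<longleftrightarrow>
     (\<forall>b\<in>B. is_dispersion I b) \<and>
     (\<forall>k\<in>comms I. \<exists>!b. b \<in> B \<and> k \<in> Kset b)"

definition Gfam :: "('n, 'k) dispersion \<Rightarrow> 'n \<times> 'n \<Rightarrow> 'k set set" where
  "Gfam b a = (if Agg b a \<noteq> {} then {Agg b a} else {}) \<union> {{k} | k. k \<in> Dis b a}"

text \<open>PA variables $x_{ij}^D$ are represented as \<open>x (i,j) D\<close> (the set $D$ determines $b$).\<close>

definition PA_feasible :: "('n, 'k) mcnd \<Rightarrow> ('n, 'k) dispersion set \<Rightarrow>
    ('n \<times> 'n \<Rightarrow> 'k set \<Rightarrow> real) \<Rightarrow> ('n \<times> 'n \<Rightarrow> real) \<Rightarrow> bool" where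
  "PA_feasible I B x y \<longleftrightarrow>
     (\<forall>a\<in>arcs I. \<forall>b\<in>B. \<forall>D\<in>Gfam b a. x a D \<ge> 0) \<and>
     (\<forall>a\<in>arcs I. 0 \<le> y a \<and> y a \<le> 1) \<and>
     (\<forall>b\<in>B. \<forall>i\<in>nodes I.
        (\<Sum>j\<in>outN I i. \<Sum>D\<in>Gfam b (i, j). x (i, j) D)
        - (\<Sum>j\<in>inN I i. \<Sum>D\<in>Gfam b (j, i). x (j, i) D)
        = (\<Sum>k\<in>Kset b. netsupply I k i)) \<and>
     (\<forall>a\<in>arcs I. (\<Sum>b\<in>B. \<Sum>D\<in>Gfam b a. x a D) \<le> cap I a * y a) \<and>
     (\<forall>a\<in>arcs I. \<forall>b\<in>B. \<forall>D\<in>Gfam b a. x a D \<le> (\<Sum>k\<in>D. dem I k) * y a)"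

definition PA_obj :: "('n, 'k) mcnd \<Rightarrow> ('n, 'k) dispersion set \<Rightarrow>
    ('n \<times> 'n \<Rightarrow> 'k set \<Rightarrow> real) \<Rightarrow> ('n \<times> 'n \<Rightarrow> real) \<Rightarrow> real" where
  "PA_obj I B x y =
     (\<Sum>a\<in>arcs I. ucost I a * (\<Sum>b\<in>B. \<Sum>D\<in>Gfam b a. x a D)) + (\<Sum>a\<in>arcs I. fcost I a * y a)"

definition Lset :: "('n, 'k) mcnd \<Rightarrow> ('n, 'k) dispersion \<Rightarrow> 'n \<Rightarrow> 'k set" where
  "Lset I b i = {k \<in> Kset b. (\<exists>j\<in>inN I i. k \<in> Dis b (j, i)) \<or> (\<exists>j\<in>outN I i. k \<in> Dis b (i, j))}"

definition Mfam :: "('n, 'k) mcnd \<Rightarrow> ('n, 'k) dispersion \<Rightarrow> 'n \<Rightarrow> 'k set set" where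
  "Mfam I b i = {{k} | k. k \<in> Lset I b i} \<union>
     (if Kset b - Lset I b i \<noteq> {} then {Kset b - Lset I b i} else {})"

definition Tin :: "('n, 'k) mcnd \<Rightarrow> ('n, 'k) dispersion \<Rightarrow> 'n \<Rightarrow> 'k set set" where
  "Tin I b i = {Agg b (j, i) | j. j \<in> inN I i \<and> Agg b (j, i) \<noteq> {}}"

definition Tout :: "('n, 'k) mcnd \<Rightarrow> ('n, 'k) dispersion \<Rightarrow> 'n \<Rightarrow> 'k set set" where
  "Tout I b i = {Agg b (i, j) | j. j \<in> outN I i \<and> Agg b (i, j) \<noteq> {}}"

text \<open>Artificial variables: \<open>zin b i C D\<close> is $z_{CD}^{ib}$ ($C \in \check{\mathcal{T}}_b^i$,
  $D \in \mathcal{M}_b^i$) and \<open>zout b i D C\<close> is $z_{DC}^{ib}$ ($D \in \mathcal{M}_b^i$,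
  $C \in \hat{\mathcal{T}}_b^i$). They are kept separate since the same pair of sets may index
  both kinds.\<close>

definition PAe_feasible :: "('n, 'k) mcnd \<Rightarrow> ('n, 'k) dispersion set \<Rightarrow>
    ('n \<times> 'n \<Rightarrow> 'k set \<Rightarrow> real) \<Rightarrow> ('n \<times> 'n \<Rightarrow> real) \<Rightarrow>
    (('n, 'k) dispersion \<Rightarrow> 'n \<Rightarrow> 'k set \<Rightarrow> 'k set \<Rightarrow> real) \<Rightarrow>
    (('n, 'k) dispersion \<Rightarrow> 'n \<Rightarrow> 'k set \<Rightarrow> 'k set \<Rightarrow> real) \<Rightarrow> bool" where
  "PAe_feasible I B x y zin zout \<longleftrightarrow>
     PA_feasible I B x y \<and>
     (\<forall>b\<in>B. \<forall>i\<in>nodes I. Lset I b i \<noteq> {} \<longrightarrow>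
        (\<forall>C\<in>Tin I b i. \<forall>D\<in>Mfam I b i. C \<inter> D \<noteq> {} \<longrightarrow> zin b i C D \<ge> 0) \<and>
        (\<forall>D\<in>Mfam I b i. \<forall>C\<in>Tout I b i. C \<inter> D \<noteq> {} \<longrightarrow> zout b i D C \<ge> 0) \<and>
        (\<forall>D\<in>Mfam I b i.
           (\<Sum>j\<in>{j\<in>outN I i. \<exists>k. D = {k} \<and> k \<in> Dis b (i, j)}. x (i, j) D)
           - (\<Sum>j\<in>{j\<in>inN I i. \<exists>k. D = {k} \<and> k \<in> Dis b (j, i)}. x (j, i) D)
           + (\<Sum>C\<in>{C\<in>Tout I b i. C \<inter> D \<noteq> {}}. zout b i D C)
           - (\<Sum>C\<in>{C\<in>Tin I b i. C \<inter> D \<noteq> {}}. zin b i C D)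
           = (\<Sum>k\<in>D. netsupply I k i)) \<and>
        (\<forall>C\<in>Tin I b i.
           (\<Sum>D\<in>{D\<in>Mfam I b i. C \<inter> D \<noteq> {}}. zin b i C D)
           - (\<Sum>j\<in>{j\<in>inN I i. Agg b (j, i) = C}. x (j, i) C) = 0) \<and>
        (\<forall>C\<in>Tout I b i.
           (\<Sum>j\<in>{j\<in>outN I i. Agg b (i, j) = C}. x (i, j) C)
           - (\<Sum>D\<in>{D\<in>Mfam I b i. C \<inter> D \<noteq> {}}. zout b i D C) = 0))"

end

theory Submission
  imports Defs
begin



lemma part_sum:
  assumes "finite P" "\<And>D. D\<in>P \<Longrightarrow> finite D"
    "\<And>D1 D2. D1\<in>P \<Longrightarrow> D2\<in>P \<Longrightarrow> D1\<noteq>D2 \<Longrightarrow> D1\<inter>D2={}"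
  shows "(\<Sum>D\<in>P. sum f D) = sum f (\<Union>P)"
  using sum.Union_disjoint[of P f] assms by auto

lemma part_sum_int:
  assumes "finite P" "\<And>D. D\<in>P \<Longrightarrow> finite D"
    "\<And>D1 D2. D1\<in>P \<Longrightarrow> D2\<in>P \<Longrightarrow> D1\<noteq>D2 \<Longrightarrow> D1\<inter>D2={}" "C \<subseteq> \<Union>P"
  shows "(\<Sum>D\<in>P. sum f (C \<inter> D)) = sum f C"
proof -
  have fin: "finite (\<Union>P)" using assms(1,2) by blast
  have "(\<Sum>D\<in>P. sum f (C \<inter> D)) = (\<Sum>D\<in>P. sum (\<lambda>k. if k \<in> C then f k else 0) D)"
    by (rule sum.cong[OF refl]) (metis (no_types) Int_commute assms(2) sum.inter_restrict)
  also have "\<dots> = sum (\<lambda>k. if k \<in> C then f k else 0) (\<Union>P)" by (rule part_sum[OF assms(1-3)])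
  also have "\<dots> = sum f (\<Union>P \<inter> C)" by (rule sum.inter_restrict[OF fin, symmetric])
  also have "\<Union>P \<inter> C = C" using assms(4) by blast
  finally show ?thesis .
qed

lemma group_sum:
  fixes f :: "'j \<Rightarrow> 'k \<Rightarrow> real"
  assumes "finite J" "\<And>j. j \<in> J \<Longrightarrow> finite (g j)"
  shows "(\<Sum>C\<in>{C\<in>{g j | j. j\<in>J \<and> g j \<noteq> {}}. C \<inter> D \<noteq> {}}. \<Sum>j\<in>{j\<in>J. g j = C}. sum (f j) (C \<inter> D))
         = (\<Sum>j\<in>J. sum (f j) (g j \<inter> D))"
proof -
  let ?S = "{j\<in>J. g j \<noteq> {}}"
  have T: "{g j | j. j\<in>J \<and> g j \<noteq> {}} = g ` ?S" by blast
  have finT: "finite (g ` ?S)" using assms(1) by simp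
  have "(\<Sum>C\<in>{C\<in>{g j | j. j\<in>J \<and> g j \<noteq> {}}. C \<inter> D \<noteq> {}}. \<Sum>j\<in>{j\<in>J. g j = C}. sum (f j) (C \<inter> D))
     = (\<Sum>C\<in>g ` ?S. \<Sum>j\<in>{j\<in>J. g j = C}. sum (f j) (C \<inter> D))"
    unfolding T sum.inter_filter[OF finT] by (rule sum.cong) auto
  also have "\<dots> = (\<Sum>C\<in>g ` ?S. \<Sum>j\<in>{j\<in>?S. g j = C}. sum (f j) (g j \<inter> D))"
    by (rule sum.cong[OF refl], rule sum.cong) auto
  also have "\<dots> = (\<Sum>j\<in>?S. sum (f j) (g j \<inter> D))"
    by (rule sum.image_gen[symmetric]) (use assms(1) in simp)
  also have "\<dots> = (\<Sum>j\<in>J. sum (f j) (g j \<inter> D))"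
    by (rule sum.mono_neutral_left) (use assms(1) in auto)
  finally show ?thesis .
qed

lemma pointwise:
  assumes "D \<in> Mfam I b i" "Agg b a \<subseteq> Kset b"
    "\<And>k. k \<in> Kset b - Lset I b i \<Longrightarrow> k \<notin> Dis b a"
  shows "(if \<exists>k. D = {k} \<and> k \<in> Dis b a then sum h D else 0) + sum h (Agg b a \<inter> D) = sum h D"
proof -
  have LK: "Lset I b i \<subseteq> Kset b" by (auto simp: Lset_def)
  from assms(1) consider (s) k where "D = {k}" "k \<in> Lset I b i"
    | (r) "D = Kset b - Lset I b i" "Kset b - Lset I b i \<noteq> {}"
    unfolding Mfam_def by (auto split: if_splits)
  then show ?thesis
  proof cases
    case s
    then have kK: "k \<in> Kset b" using LK by blast
    show ?thesis
    proof (cases "k \<in> Agg b a")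
      case True
      then have "k \<notin> Dis b a" by (simp add: Dis_def)
      then show ?thesis using s True by auto
    next
      case False
      then have "k \<in> Dis b a" using kK by (simp add: Dis_def)
      then show ?thesis using s False by auto
    qed
  next
    case r
    have n: "\<not> (\<exists>k. D = {k} \<and> k \<in> Dis b a)" using r assms(3) by auto
    have "Agg b a \<inter> D = D" using r assms(3) by (auto simp: Dis_def)
    then show ?thesis by (simp only: n if_False) simp
  qed
qed

lemma part1:
  assumes inst: "mcnd_instance I" and pa: "partial_aggregation I B" and da: "DA_feasible I xb yb"
  shows "\<exists>zin zout.
         PAe_feasible I B (\<lambda>a D. \<Sum>k\<in>D. xb k a) yb zin zout \<and>
         PA_obj I B (\<lambda>a D. \<Sum>k\<in>D. xb k a) yb = DA_obj I xb yb"
proof -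
  have finN: "finite (nodes I)" and arcsN: "arcs I \<subseteq> nodes I \<times> nodes I"
    and finK: "finite (comms I)"
    using inst by (auto simp: mcnd_instance_def)
  have finout: "finite (outN I i)" for i
    by (rule finite_subset[OF _ finN]) (use arcsN in \<open>auto simp: outN_def\<close>)
  have finin: "finite (inN I i)" for i
    by (rule finite_subset[OF _ finN]) (use arcsN in \<open>auto simp: inN_def\<close>)
  have xnn: "\<And>k a. k \<in> comms I \<Longrightarrow> a \<in> arcs I \<Longrightarrow> xb k a \<ge> 0"
    and ybd: "\<forall>a\<in>arcs I. 0 \<le> yb a \<and> yb a \<le> 1"
    and cons: "\<And>k i. k \<in> comms I \<Longrightarrow> i \<in> nodes I \<Longrightarrow>
        (\<Sum>j\<in>outN I i. xb k (i, j)) - (\<Sum>j\<in>inN I i. xb k (j, i)) = netsupply I k i"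
    and capc: "\<And>a. a\<in>arcs I \<Longrightarrow> (\<Sum>k\<in>comms I. xb k a) \<le> cap I a * yb a"
    and lnk: "\<And>k a. k\<in>comms I \<Longrightarrow> a\<in>arcs I \<Longrightarrow> xb k a \<le> dem I k * yb a"
    using da unfolding DA_feasible_def by auto
  have KB: "\<And>b. b \<in> B \<Longrightarrow> Kset b \<subseteq> comms I"
    and AK: "\<And>b a. b \<in> B \<Longrightarrow> a \<in> arcs I \<Longrightarrow> Agg b a \<subseteq> Kset b"
    and Kne: "\<And>b. b \<in> B \<Longrightarrow> Kset b \<noteq> {}"
    and uniq: "\<And>k. k \<in> comms I \<Longrightarrow> \<exists>!b. b \<in> B \<and> k \<in> Kset b"
    using pa unfolding partial_aggregation_def is_dispersion_def by auto
  have finKb: "\<And>b. b \<in> B \<Longrightarrow> finite (Kset b)" using KB finK finite_subset by blast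
  have disj: "\<And>b1 b2. b1 \<in> B \<Longrightarrow> b2 \<in> B \<Longrightarrow> b1 \<noteq> b2 \<Longrightarrow> Kset b1 \<inter> Kset b2 = {}"
  proof -
    fix b1 b2 assume "b1 \<in> B" "b2 \<in> B" "b1 \<noteq> b2"
    show "Kset b1 \<inter> Kset b2 = {}"
    proof (rule ccontr)
      assume "Kset b1 \<inter> Kset b2 \<noteq> {}"
      then obtain k where k: "k \<in> Kset b1" "k \<in> Kset b2" by blast
      then have "k \<in> comms I" using KB \<open>b1 \<in> B\<close> by blast
      then show False using uniq k \<open>b1 \<in> B\<close> \<open>b2 \<in> B\<close> \<open>b1 \<noteq> b2\<close> by blast
    qed
  qed
  have injK: "inj_on Kset B"
  proof
    fix b1 b2 assume "b1 \<in> B" "b2 \<in> B" "Kset b1 = Kset b2"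
    then show "b1 = b2" using disj Kne by fastforce
  qed
  have finB: "finite B"
  proof -
    have "Kset ` B \<subseteq> Pow (comms I)" using KB by blast
    then have "finite (Kset ` B)" using finK finite_subset by blast
    then show ?thesis using injK finite_image_iff by blast
  qed
  have UB: "(\<Union>b\<in>B. Kset b) = comms I"
  proof
    show "(\<Union>b\<in>B. Kset b) \<subseteq> comms I" using KB by blast
    show "comms I \<subseteq> (\<Union>b\<in>B. Kset b)"
    proof
      fix k assume "k \<in> comms I"
      then obtain b where "b \<in> B" "k \<in> Kset b" using uniq by blast
      then show "k \<in> (\<Union>b\<in>B. Kset b)" by blast
    qed
  qed
  have sumB: "(\<Sum>b\<in>B. sum f (Kset b)) = sum f (comms I)" for f :: "'b \<Rightarrow> real"
    using sum.UNION_disjoint[OF finB, of Kset f] finKb disj UB by simp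
  have sumG: "(\<Sum>D\<in>Gfam b a. sum f D) = sum f (Kset b)" if "b \<in> B" "a \<in> arcs I" for b a and f :: "'b \<Rightarrow> real"
  proof -
    have sub: "Gfam b a \<subseteq> {Agg b a} \<union> (\<lambda>k. {k}) ` Kset b" by (auto simp: Gfam_def Dis_def)
    have "(\<Sum>D\<in>Gfam b a. sum f D) = sum f (\<Union>(Gfam b a))"
    proof (rule part_sum)
      show "finite (Gfam b a)" using sub finKb[OF that(1)] finite_subset by blast
      show "finite D" if "D \<in> Gfam b a" for D
        using that sub finKb[OF \<open>b \<in> B\<close>] AK[OF \<open>b \<in> B\<close> \<open>a \<in> arcs I\<close>] finite_subset by blast
      show "D1 \<inter> D2 = {}" if "D1 \<in> Gfam b a" "D2 \<in> Gfam b a" "D1 \<noteq> D2" for D1 D2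
        using that by (auto simp: Gfam_def Dis_def split: if_splits)
    qed
    also have "\<Union>(Gfam b a) = Kset b" using AK[OF that] by (auto simp: Gfam_def Dis_def)
    finally show ?thesis .
  qed
  define x where "x = (\<lambda>a D. \<Sum>k\<in>D. xb k a)"
  define zin where "zin = (\<lambda>b i C D. \<Sum>j\<in>{j\<in>inN I i. Agg b (j,i) = C}. \<Sum>k\<in>C\<inter>D. xb k (j,i))"
  define zout where "zout = (\<lambda>b i D C. \<Sum>j\<in>{j\<in>outN I i. Agg b (i,j) = C}. \<Sum>k\<in>C\<inter>D. xb k (i,j))"
  have Gsub: "D \<subseteq> comms I" if "b \<in> B" "a \<in> arcs I" "D \<in> Gfam b a" for b a D
    using that AK[OF that(1,2)] KB[OF that(1)] by (auto simp: Gfam_def Dis_def split: if_splits)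
  have outA: "j \<in> outN I i \<Longrightarrow> (i,j) \<in> arcs I" for i j by (simp add: outN_def)
  have inA: "j \<in> inN I i \<Longrightarrow> (j,i) \<in> arcs I" for i j by (simp add: inN_def)
  have PA: "PA_feasible I B x yb"
    unfolding PA_feasible_def
  proof (intro conjI ballI)
    fix a b D assume "a \<in> arcs I" "b \<in> B" "D \<in> Gfam b a"
    then show "0 \<le> x a D" unfolding x_def using Gsub xnn by (meson subsetD sum_nonneg)
  next
    fix a assume "a \<in> arcs I" then show "0 \<le> yb a" "yb a \<le> 1" using ybd by auto
  next
    fix b i assume b: "b \<in> B" and i: "i \<in> nodes I"
    have "(\<Sum>j\<in>outN I i. \<Sum>D\<in>Gfam b (i, j). x (i, j) D) - (\<Sum>j\<in>inN I i. \<Sum>D\<in>Gfam b (j, i). x (j, i) D)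
        = (\<Sum>j\<in>outN I i. \<Sum>k\<in>Kset b. xb k (i, j)) - (\<Sum>j\<in>inN I i. \<Sum>k\<in>Kset b. xb k (j, i))"
      unfolding x_def using sumG[OF b] outA inA by simp
    also have "\<dots> = (\<Sum>k\<in>Kset b. (\<Sum>j\<in>outN I i. xb k (i, j)) - (\<Sum>j\<in>inN I i. xb k (j, i)))"
      by (simp add: sum.swap[of _ "outN I i"] sum.swap[of _ "inN I i"] sum_subtractf)
    also have "\<dots> = (\<Sum>k\<in>Kset b. netsupply I k i)"
      using cons KB[OF b] i by (intro sum.cong) auto
    finally show "(\<Sum>j\<in>outN I i. \<Sum>D\<in>Gfam b (i, j). x (i, j) D) - (\<Sum>j\<in>inN I i. \<Sum>D\<in>Gfam b (j, i). x (j, i) D)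
        = (\<Sum>k\<in>Kset b. netsupply I k i)" .
  next
    fix a assume a: "a \<in> arcs I"
    have "(\<Sum>b\<in>B. \<Sum>D\<in>Gfam b a. x a D) = (\<Sum>b\<in>B. \<Sum>k\<in>Kset b. xb k a)"
      unfolding x_def using sumG a by simp
    also have "\<dots> = (\<Sum>k\<in>comms I. xb k a)" by (rule sumB)
    finally show "(\<Sum>b\<in>B. \<Sum>D\<in>Gfam b a. x a D) \<le> cap I a * yb a" using capc[OF a] by simp
  next
    fix a b D assume "a \<in> arcs I" "b \<in> B" "D \<in> Gfam b a"
    then have "D \<subseteq> comms I" using Gsub by blast
    then have "(\<Sum>k\<in>D. xb k a) \<le> (\<Sum>k\<in>D. dem I k * yb a)"
      using \<open>a \<in> arcs I\<close> by (intro sum_mono, intro lnk) auto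
    then show "x a D \<le> (\<Sum>k\<in>D. dem I k) * yb a" by (simp add: x_def sum_distrib_right)
  qed
  have obj: "PA_obj I B x yb = DA_obj I xb yb"
  proof -
    have "(\<Sum>b\<in>B. \<Sum>D\<in>Gfam b a. x a D) = (\<Sum>k\<in>comms I. xb k a)" if "a \<in> arcs I" for a
      unfolding x_def using sumG that sumB by simp
    then show ?thesis unfolding PA_obj_def DA_obj_def by simp
  qed
  have ext: "Lset I b i \<noteq> {} \<longrightarrow>
        (\<forall>C\<in>Tin I b i. \<forall>D\<in>Mfam I b i. C \<inter> D \<noteq> {} \<longrightarrow> zin b i C D \<ge> 0) \<and>
        (\<forall>D\<in>Mfam I b i. \<forall>C\<in>Tout I b i. C \<inter> D \<noteq> {} \<longrightarrow> zout b i D C \<ge> 0) \<and>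
        (\<forall>D\<in>Mfam I b i.
           (\<Sum>j\<in>{j\<in>outN I i. \<exists>k. D = {k} \<and> k \<in> Dis b (i, j)}. x (i, j) D)
           - (\<Sum>j\<in>{j\<in>inN I i. \<exists>k. D = {k} \<and> k \<in> Dis b (j, i)}. x (j, i) D)
           + (\<Sum>C\<in>{C\<in>Tout I b i. C \<inter> D \<noteq> {}}. zout b i D C)
           - (\<Sum>C\<in>{C\<in>Tin I b i. C \<inter> D \<noteq> {}}. zin b i C D)
           = (\<Sum>k\<in>D. netsupply I k i)) \<and>
        (\<forall>C\<in>Tin I b i.
           (\<Sum>D\<in>{D\<in>Mfam I b i. C \<inter> D \<noteq> {}}. zin b i C D)
           - (\<Sum>j\<in>{j\<in>inN I i. Agg b (j, i) = C}. x (j, i) C) = 0) \<and>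
        (\<forall>C\<in>Tout I b i.
           (\<Sum>j\<in>{j\<in>outN I i. Agg b (i, j) = C}. x (i, j) C)
           - (\<Sum>D\<in>{D\<in>Mfam I b i. C \<inter> D \<noteq> {}}. zout b i D C) = 0)"
    if b: "b \<in> B" and i: "i \<in> nodes I" for b i
  proof
    assume "Lset I b i \<noteq> {}"
    let ?M = "Mfam I b i"
    have LK: "Lset I b i \<subseteq> Kset b" by (auto simp: Lset_def)
    have Msub: "D \<subseteq> Kset b" if "D \<in> ?M" for D
      using that LK by (auto simp: Mfam_def split: if_splits)
    have finM: "finite ?M"
    proof (rule finite_subset)
      show "?M \<subseteq> (\<lambda>k. {k}) ` Kset b \<union> {Kset b - Lset I b i}"
        using LK by (auto simp: Mfam_def)
      show "finite ((\<lambda>k. {k}) ` Kset b \<union> {Kset b - Lset I b i})" using finKb[OF b] by simp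
    qed
    have Mfin: "finite D" if "D \<in> ?M" for D using Msub[OF that] finKb[OF b] finite_subset by blast
    have Mdisj: "D1 \<inter> D2 = {}" if "D1 \<in> ?M" "D2 \<in> ?M" "D1 \<noteq> D2" for D1 D2
      using that by (auto simp: Mfam_def split: if_splits)
    have UM: "\<Union>?M = Kset b" using LK by (auto simp: Mfam_def split: if_splits)
    have AKo: "Agg b (i,j) \<subseteq> Kset b" if "j \<in> outN I i" for j using AK[OF b outA[OF that]] .
    have AKi: "Agg b (j,i) \<subseteq> Kset b" if "j \<in> inN I i" for j using AK[OF b inA[OF that]] .
    have nDo: "k \<notin> Dis b (i,j)" if "j \<in> outN I i" "k \<in> Kset b - Lset I b i" for j k
      using that by (auto simp: Lset_def)
    have nDi: "k \<notin> Dis b (j,i)" if "j \<in> inN I i" "k \<in> Kset b - Lset I b i" for j k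
      using that by (auto simp: Lset_def)
    show "(\<forall>C\<in>Tin I b i. \<forall>D\<in>Mfam I b i. C \<inter> D \<noteq> {} \<longrightarrow> zin b i C D \<ge> 0) \<and>
        (\<forall>D\<in>Mfam I b i. \<forall>C\<in>Tout I b i. C \<inter> D \<noteq> {} \<longrightarrow> zout b i D C \<ge> 0) \<and>
        (\<forall>D\<in>Mfam I b i.
           (\<Sum>j\<in>{j\<in>outN I i. \<exists>k. D = {k} \<and> k \<in> Dis b (i, j)}. x (i, j) D)
           - (\<Sum>j\<in>{j\<in>inN I i. \<exists>k. D = {k} \<and> k \<in> Dis b (j, i)}. x (j, i) D)
           + (\<Sum>C\<in>{C\<in>Tout I b i. C \<inter> D \<noteq> {}}. zout b i D C)
           - (\<Sum>C\<in>{C\<in>Tin I b i. C \<inter> D \<noteq> {}}. zin b i C D)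
           = (\<Sum>k\<in>D. netsupply I k i)) \<and>
        (\<forall>C\<in>Tin I b i.
           (\<Sum>D\<in>{D\<in>Mfam I b i. C \<inter> D \<noteq> {}}. zin b i C D)
           - (\<Sum>j\<in>{j\<in>inN I i. Agg b (j, i) = C}. x (j, i) C) = 0) \<and>
        (\<forall>C\<in>Tout I b i.
           (\<Sum>j\<in>{j\<in>outN I i. Agg b (i, j) = C}. x (i, j) C)
           - (\<Sum>D\<in>{D\<in>Mfam I b i. C \<inter> D \<noteq> {}}. zout b i D C) = 0)"
    proof (intro conjI ballI impI)
      fix C D assume "C \<in> Tin I b i" "D \<in> ?M" "C \<inter> D \<noteq> {}"
      show "zin b i C D \<ge> 0" unfolding zin_def
      proof (intro sum_nonneg)
        fix j k assume j: "j \<in> {j\<in>inN I i. Agg b (j,i) = C}" and k: "k \<in> C \<inter> D"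
        then have "k \<in> comms I" using AKi KB[OF b] by blast
        then show "xb k (j,i) \<ge> 0" using xnn inA j by blast
      qed
    next
      fix C D assume "C \<in> Tout I b i" "D \<in> ?M" "C \<inter> D \<noteq> {}"
      show "zout b i D C \<ge> 0" unfolding zout_def
      proof (intro sum_nonneg)
        fix j k assume j: "j \<in> {j\<in>outN I i. Agg b (i,j) = C}" and k: "k \<in> C \<inter> D"
        then have "k \<in> comms I" using AKo KB[OF b] by blast
        then show "xb k (i,j) \<ge> 0" using xnn outA j by blast
      qed
    next
      fix D assume D: "D \<in> ?M"
      have o1: "(\<Sum>j\<in>{j\<in>outN I i. \<exists>k. D = {k} \<and> k \<in> Dis b (i, j)}. x (i, j) D)
          = (\<Sum>j\<in>outN I i. if \<exists>k. D = {k} \<and> k \<in> Dis b (i, j) then sum (\<lambda>k. xb k (i,j)) D else 0)"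
        by (simp add: sum.inter_filter finout x_def)
      have i1: "(\<Sum>j\<in>{j\<in>inN I i. \<exists>k. D = {k} \<and> k \<in> Dis b (j, i)}. x (j, i) D)
          = (\<Sum>j\<in>inN I i. if \<exists>k. D = {k} \<and> k \<in> Dis b (j, i) then sum (\<lambda>k. xb k (j,i)) D else 0)"
        by (simp add: sum.inter_filter finin x_def)
      have o2: "(\<Sum>C\<in>{C\<in>Tout I b i. C \<inter> D \<noteq> {}}. zout b i D C)
          = (\<Sum>j\<in>outN I i. sum (\<lambda>k. xb k (i,j)) (Agg b (i,j) \<inter> D))"
        unfolding zout_def Tout_def
        using group_sum[where J="outN I i" and g="\<lambda>j. Agg b (i,j)" and D=D and f="\<lambda>j k. xb k (i,j)"]
          finout AKo finKb[OF b] finite_subset by (metis (no_types, lifting))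
      have i2: "(\<Sum>C\<in>{C\<in>Tin I b i. C \<inter> D \<noteq> {}}. zin b i C D)
          = (\<Sum>j\<in>inN I i. sum (\<lambda>k. xb k (j,i)) (Agg b (j,i) \<inter> D))"
        unfolding zin_def Tin_def
        using group_sum[where J="inN I i" and g="\<lambda>j. Agg b (j,i)" and D=D and f="\<lambda>j k. xb k (j,i)"]
          finin AKi finKb[OF b] finite_subset by (metis (no_types, lifting))
      have o3: "(\<Sum>j\<in>outN I i. if \<exists>k. D = {k} \<and> k \<in> Dis b (i, j) then sum (\<lambda>k. xb k (i,j)) D else 0)
          + (\<Sum>j\<in>outN I i. sum (\<lambda>k. xb k (i,j)) (Agg b (i,j) \<inter> D))
          = (\<Sum>j\<in>outN I i. sum (\<lambda>k. xb k (i,j)) D)"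
        unfolding sum.distrib[symmetric]
        by (rule sum.cong[OF refl], rule pointwise[OF D AKo]) (auto dest: nDo)
      have i3: "(\<Sum>j\<in>inN I i. if \<exists>k. D = {k} \<and> k \<in> Dis b (j, i) then sum (\<lambda>k. xb k (j,i)) D else 0)
          + (\<Sum>j\<in>inN I i. sum (\<lambda>k. xb k (j,i)) (Agg b (j,i) \<inter> D))
          = (\<Sum>j\<in>inN I i. sum (\<lambda>k. xb k (j,i)) D)"
        unfolding sum.distrib[symmetric]
        by (rule sum.cong[OF refl], rule pointwise[OF D AKi]) (auto dest: nDi)
      have "(\<Sum>j\<in>outN I i. sum (\<lambda>k. xb k (i,j)) D) - (\<Sum>j\<in>inN I i. sum (\<lambda>k. xb k (j,i)) D)
          = (\<Sum>k\<in>D. (\<Sum>j\<in>outN I i. xb k (i, j)) - (\<Sum>j\<in>inN I i. xb k (j, i)))"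
        by (simp add: sum.swap[of _ "outN I i"] sum.swap[of _ "inN I i"] sum_subtractf)
      also have "\<dots> = (\<Sum>k\<in>D. netsupply I k i)"
        using cons KB[OF b] Msub[OF D] i by (intro sum.cong) auto
      finally have fin: "(\<Sum>j\<in>outN I i. sum (\<lambda>k. xb k (i,j)) D) - (\<Sum>j\<in>inN I i. sum (\<lambda>k. xb k (j,i)) D)
          = (\<Sum>k\<in>D. netsupply I k i)" .
      show "(\<Sum>j\<in>{j\<in>outN I i. \<exists>k. D = {k} \<and> k \<in> Dis b (i, j)}. x (i, j) D)
           - (\<Sum>j\<in>{j\<in>inN I i. \<exists>k. D = {k} \<and> k \<in> Dis b (j, i)}. x (j, i) D)
           + (\<Sum>C\<in>{C\<in>Tout I b i. C \<inter> D \<noteq> {}}. zout b i D C)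
           - (\<Sum>C\<in>{C\<in>Tin I b i. C \<inter> D \<noteq> {}}. zin b i C D)
           = (\<Sum>k\<in>D. netsupply I k i)"
        unfolding o1 i1 o2 i2 using o3 i3 fin by linarith
    next
      fix C assume C: "C \<in> Tin I b i"
      then obtain j0 where "j0 \<in> inN I i" "C = Agg b (j0, i)" by (auto simp: Tin_def)
      then have CK: "C \<subseteq> \<Union>?M" using AKi UM by blast
      have "(\<Sum>D\<in>{D\<in>?M. C \<inter> D \<noteq> {}}. zin b i C D) = (\<Sum>D\<in>?M. zin b i C D)"
        by (rule sum.mono_neutral_left) (use finM in \<open>auto simp: zin_def\<close>)
      also have "\<dots> = (\<Sum>j\<in>{j\<in>inN I i. Agg b (j,i) = C}. \<Sum>D\<in>?M. sum (\<lambda>k. xb k (j,i)) (C \<inter> D))"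
        unfolding zin_def by (rule sum.swap)
      also have "\<dots> = (\<Sum>j\<in>{j\<in>inN I i. Agg b (j,i) = C}. x (j,i) C)"
        unfolding x_def by (rule sum.cong[OF refl], rule part_sum_int[OF finM Mfin Mdisj CK])
      finally show "(\<Sum>D\<in>{D\<in>?M. C \<inter> D \<noteq> {}}. zin b i C D)
           - (\<Sum>j\<in>{j\<in>inN I i. Agg b (j, i) = C}. x (j, i) C) = 0" by simp
    next
      fix C assume C: "C \<in> Tout I b i"
      then obtain j0 where "j0 \<in> outN I i" "C = Agg b (i, j0)" by (auto simp: Tout_def)
      then have CK: "C \<subseteq> \<Union>?M" using AKo UM by blast
      have "(\<Sum>D\<in>{D\<in>?M. C \<inter> D \<noteq> {}}. zout b i D C) = (\<Sum>D\<in>?M. zout b i D C)"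
        by (rule sum.mono_neutral_left) (use finM in \<open>auto simp: zout_def\<close>)
      also have "\<dots> = (\<Sum>j\<in>{j\<in>outN I i. Agg b (i,j) = C}. \<Sum>D\<in>?M. sum (\<lambda>k. xb k (i,j)) (C \<inter> D))"
        unfolding zout_def by (rule sum.swap)
      also have "\<dots> = (\<Sum>j\<in>{j\<in>outN I i. Agg b (i,j) = C}. x (i,j) C)"
        unfolding x_def by (rule sum.cong[OF refl], rule part_sum_int[OF finM Mfin Mdisj CK])
      finally show "(\<Sum>j\<in>{j\<in>outN I i. Agg b (i, j) = C}. x (i, j) C)
           - (\<Sum>D\<in>{D\<in>?M. C \<inter> D \<noteq> {}}. zout b i D C) = 0" by simp
    qed
  qed
  show ?thesis
    unfolding x_def[symmetric]
    using PA obj ext unfolding PAe_feasible_def by blast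
qed



lemma part2:
  "\<exists>(I :: (nat, nat) mcnd) (B :: (nat, nat) dispersion set) x y zin zout.
      mcnd_instance I \<and> partial_aggregation I B \<and> PAe_feasible I B x y zin zout \<and>
      \<not> (\<exists>xb. DA_feasible I xb y \<and>
             (\<forall>a\<in>arcs I. \<forall>b\<in>B. \<forall>D\<in>Gfam b a. x a D = (\<Sum>k\<in>D. xb k a)))"
proof -
  define I :: "(nat, nat) mcnd" where "I = \<lparr>nodes = {0,1,2}, arcs = {(0,1),(1,2)}, comms = {1,2},
     orig = (\<lambda>_. 0), dst = (\<lambda>k. k), dem = (\<lambda>_. 1), cap = (\<lambda>_. 2), ucost = (\<lambda>_. 0), fcost = (\<lambda>_. 0)\<rparr>"
  define b :: "(nat, nat) dispersion" where "b = ({1,2}, \<lambda>_. {1,2})"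
  define x :: "nat \<times> nat \<Rightarrow> nat set \<Rightarrow> real" where "x = (\<lambda>a D. if a = (0,1) then 2 else 1)"
  define y :: "nat \<times> nat \<Rightarrow> real" where "y = (\<lambda>a. if a = (0,1) then 1 else 1/2)"
  have out: "outN I 0 = {1}" "outN I 1 = {2}" "outN I 2 = {}"
    by (auto simp: outN_def I_def)
  have inn: "inN I 0 = {}" "inN I 1 = {0}" "inN I 2 = {1}"
    by (auto simp: inN_def I_def)
  have G: "Gfam b a = {{1,2}}" for a
    by (auto simp: Gfam_def Agg_def Dis_def Kset_def b_def)
  have L: "Lset I b i = {}" for i
    by (auto simp: Lset_def Dis_def Agg_def Kset_def b_def)
  have inst: "mcnd_instance I" by (auto simp: mcnd_instance_def I_def)
  have pa: "partial_aggregation I {b}"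
    by (auto simp: partial_aggregation_def is_dispersion_def Kset_def Agg_def b_def I_def)
  have nodes: "nodes I = {0,1,2}" "arcs I = {(0,1),(1,2)}" by (simp_all add: I_def)
  have ns: "netsupply I k i = (if i = 0 then 1 else 0) - (if i = k then 1 else 0)" for k i
    by (simp add: netsupply_def I_def)
  have Kb: "Kset b = {1,2}" by (simp add: Kset_def b_def)
  have cd: "cap I = (\<lambda>_. 2)" "dem I = (\<lambda>_. 1)" by (simp_all add: I_def)
  have feas: "PA_feasible I {b} x y"
    unfolding PA_feasible_def nodes G Kb
    using out(2) inn(2) by (simp add: G Kb x_def y_def out inn ns cd)
  have pae: "PAe_feasible I {b} x y (\<lambda>_ _ _ _. 0) (\<lambda>_ _ _ _. 0)"
    using feas by (simp add: PAe_feasible_def L)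
  have nda: "\<not> DA_feasible I xb y" for xb
  proof
    assume "DA_feasible I xb y"
    then have c: "(\<Sum>j\<in>outN I 2. xb 2 (2, j)) - (\<Sum>j\<in>inN I 2. xb 2 (j, 2)) = netsupply I 2 2"
      and l: "xb 2 (1,2) \<le> dem I 2 * y (1,2)"
      unfolding DA_feasible_def by (auto simp: I_def)
    from c have "xb 2 (1,2) = 1" by (simp add: out inn ns)
    with l show False by (simp add: I_def y_def)
  qed
  show ?thesis using inst pa pae nda by blast
qed


theorem theorem1:
  shows
  "(\<forall>(I :: ('n, 'k) mcnd) (B :: ('n, 'k) dispersion set) xb yb.
      mcnd_instance I \<and> partial_aggregation I B \<and> DA_feasible I xb yb \<longrightarrow>
      (\<exists>zin zout.
         PAe_feasible I B (\<lambda>a D. \<Sum>k\<in>D. xb k a) yb zin zout \<and>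
         PA_obj I B (\<lambda>a D. \<Sum>k\<in>D. xb k a) yb = DA_obj I xb yb))
   \<and>
   (\<exists>(I :: (nat, nat) mcnd) (B :: (nat, nat) dispersion set) x y zin zout.
      mcnd_instance I \<and> partial_aggregation I B \<and> PAe_feasible I B x y zin zout \<and>
      \<not> (\<exists>xb. DA_feasible I xb y \<and>
             (\<forall>a\<in>arcs I. \<forall>b\<in>B. \<forall>D\<in>Gfam b a. x a D = (\<Sum>k\<in>D. xb k a))))"
  using part1 part2 by blast

end
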